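(* Let $N\ge 1$ and let $J$ be a persymmetric Jacobi matrix of order $N+1$ that realizes perfect state transfer, with eigenvalues $\lambda_0<\lambda_1<\dots<\lambda_N$ satisfying \[\lambda_1-\lambda_0=\lambda_2-\lambda_1=\dots=\lambda_N-\lambda_{N-1}.\] Then $J$ does not have Early State Exclusion: if $T_0$ is the earliest positive time at which $J$ realizes perfect state transfer, there is no $t\in(0,T_0)$ with $(e^{-iJt}\mathbf{e}_0,\mathbf{e}_0)_{\mathbb{C}^{N+1}}=0$.
   Context: A Jacobi matrix of order $N+1$ is a real symmetric tridiagonal $(N+1)\times(N+1)$ matrix $J$ with diagonal entries $a_0,\dots,a_N\in\mathbb{R}$ and off-diagonal entries $b_0,\dots,b_{N-1}>0$. It is persymmetric if $a_k=a_{N-k}$ for $k=0,\dots,N$ and $b_l=b_{N-1-l}$ for $l=0,\dots,N-1$. Let $\mathbf{e}_0,\dots,\mathbf{e}_N$ be the standard basis of $\mathbb{C}^{N+1}$. $J$ realizes perfect state transfer (PST) at time $T>0$ if $e^{-iTJ}\mathbf{e}_0=e^{i\phi}\mathbf{e}_N$ for some $\phi\in\mathbb{R}$. If $T_0$ is the earliest (smallest positive) such time, $J$ is said to have Early State Exclusion (ESE) at time $t$ if $0<t<T_0$ and $(e^{-iJt}\mathbf{e}_0,\mathbf{e}_0)_{\mathbb{C}^{N+1}}=0$. *)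

theory Defs
  imports Complex_Main "Jordan_Normal_Form.Char_Poly" "Jordan_Normal_Form.Conjugate"
begin

definition jacobi_matrix :: "nat \<Rightarrow> real mat \<Rightarrow> bool" where
  "jacobi_matrix N J \<longleftrightarrow>
     J \<in> carrier_mat (N+1) (N+1) \<and>
     (\<forall>i\<le>N. \<forall>j\<le>N. J $$ (i,j) = J $$ (j,i)) \<and>
     (\<forall>i\<le>N. \<forall>j\<le>N. j \<noteq> i \<and> j \<noteq> Suc i \<and> i \<noteq> Suc j \<longrightarrow> J $$ (i,j) = 0) \<and>
     (\<forall>l<N. J $$ (l, Suc l) > 0)"

definition persymmetric :: "nat \<Rightarrow> real mat \<Rightarrow> bool" where
  "persymmetric N J \<longleftrightarrow>
     (\<forall>k\<le>N. J $$ (k,k) = J $$ (N-k, N-k)) \<and>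
     (\<forall>l<N. J $$ (l, Suc l) = J $$ (N-1-l, N-l))"

definition evol :: "nat \<Rightarrow> real mat \<Rightarrow> real \<Rightarrow> complex vec" where
  "evol N J t = vec (N+1) (\<lambda>j. \<Sum>k. ((- \<i> * complex_of_real t) ^ k / fact k) *
        ((map_mat complex_of_real J) ^\<^sub>m k) $$ (j, 0))"

definition PST_at :: "nat \<Rightarrow> real mat \<Rightarrow> real \<Rightarrow> bool" where
  "PST_at N J T \<longleftrightarrow> T > 0 \<and>
     (\<exists>\<phi>::real. evol N J T = exp (\<i> * complex_of_real \<phi>) \<cdot>\<^sub>v unit_vec (N+1) N)"

definition earliest_PST :: "nat \<Rightarrow> real mat \<Rightarrow> real \<Rightarrow> bool" where
  "earliest_PST N J T0 \<longleftrightarrow> PST_at N J T0 \<and> (\<forall>T. PST_at N J T \<longrightarrow> T0 \<le> T)"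

definition ESE_at :: "nat \<Rightarrow> real mat \<Rightarrow> real \<Rightarrow> bool" where
  "ESE_at N J t \<longleftrightarrow> (\<exists>T0. earliest_PST N J T0 \<and> 0 < t \<and> t < T0) \<and>
     evol N J t \<bullet>c unit_vec (N+1) 0 = 0"

end

theory Submission
  imports Defs
begin


lemma mult_entry:
  assumes "A \<in> carrier_mat n n" "B \<in> carrier_mat n n" "i < n" "j < n"
  shows "(A * B) $$ (i,j) = (\<Sum>l<n. A $$ (i,l) * B $$ (l,j))"
  using assms by (simp add: scalar_prod_def lessThan_atLeast0)

lemma mult_vec_entry:
  assumes "A \<in> carrier_mat n n" "v \<in> carrier_vec n" "i < n"
  shows "(A *\<^sub>v v) $ i = (\<Sum>l<n. A $$ (i,l) * v $ l)"
  using assms by (simp add: scalar_prod_def lessThan_atLeast0)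

lemma ESE_entry: "evol N J t \<bullet>c unit_vec (N+1) 0 = evol N J t $ 0"
proof -
  have "conjugate (unit_vec (N+1) 0) = (unit_vec (N+1) 0 :: complex vec)"
    by (rule eq_vecI) auto
  then show ?thesis by (simp add: scalar_prod_right_unit)
qed

lemma eig_zero:
  assumes J: "jacobi_matrix N J"
    and ev: "\<forall>i\<le>N. (\<Sum>j\<le>N. J$$(i,j) * v j) = \<mu> * v i" and v0: "v 0 = 0"
  shows "\<forall>i\<le>N. v i = 0"
proof -
  have "\<forall>i'\<le>i. v i' = 0" if "i \<le> N" for i using that
  proof (induction i)
    case 0 then show ?case using v0 by simp
  next
    case (Suc i)
    have IH: "\<forall>i'\<le>i. v i' = 0" using Suc by simp
    have iN: "i \<le> N" "Suc i \<le> N" using Suc by auto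
    have "(\<Sum>j\<le>N. J$$(i,j) * v j) = (\<Sum>j\<le>N. if j = Suc i then J$$(i,Suc i) * v (Suc i) else 0)"
    proof (rule sum.cong)
      fix j assume j: "j \<in> {..N}"
      show "J$$(i,j) * v j = (if j = Suc i then J$$(i,Suc i) * v (Suc i) else 0)"
      proof (cases "j \<le> i")
        case True then show ?thesis using IH by auto
      next
        case False
        then have "j = Suc i \<or> (j \<noteq> i \<and> j \<noteq> Suc i \<and> i \<noteq> Suc j)" by auto
        then show ?thesis using J j iN unfolding jacobi_matrix_def by auto
      qed
    qed simp
    also have "\<dots> = J$$(i,Suc i) * v (Suc i)" using iN by simp
    finally have "J$$(i,Suc i) * v (Suc i) = \<mu> * v i" using ev iN by simp
    then have "J$$(i,Suc i) * v (Suc i) = 0" using IH by simp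
    moreover have "J$$(i,Suc i) > 0" using J iN unfolding jacobi_matrix_def by auto
    ultimately have "v (Suc i) = 0" by simp
    then show ?case using IH le_Suc_eq by auto
  qed
  then show ?thesis by blast
qed

lemma pow_band:
  assumes J: "jacobi_matrix N J"
  shows "i \<le> N \<Longrightarrow> j \<le> N \<Longrightarrow> j + m < i \<Longrightarrow> (J ^\<^sub>m m) $$ (i,j) = 0"
proof (induction m arbitrary: i j)
  case 0
  have C: "J \<in> carrier_mat (N+1) (N+1)" using J unfolding jacobi_matrix_def by auto
  then show ?case using 0 by simp
next
  case (Suc m)
  have C: "J \<in> carrier_mat (N+1) (N+1)" using J unfolding jacobi_matrix_def by auto
  have "(J ^\<^sub>m Suc m) $$ (i,j) = (\<Sum>l<N+1. (J ^\<^sub>m m) $$ (i,l) * J $$ (l,j))"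
    unfolding pow_mat.simps(2) using Suc.prems
    by (intro mult_entry[OF pow_carrier_mat[OF C] C]) auto
  also have "\<dots> = 0"
  proof (rule sum.neutral, rule ballI)
    fix l assume l: "l \<in> {..<N+1}"
    show "(J ^\<^sub>m m) $$ (i,l) * J $$ (l,j) = 0"
    proof (cases "l \<le> Suc j")
      case True then show ?thesis using Suc l by simp
    next
      case False then show ?thesis using J l Suc.prems unfolding jacobi_matrix_def by auto
    qed
  qed
  finally show ?case .
qed


lemma spectral:
  assumes J: "jacobi_matrix N J"
    and ev: "\<forall>k\<le>N. eigenvalue J (lam k)"
    and inj: "\<forall>k\<le>N. \<forall>k'\<le>N. lam k = lam k' \<longrightarrow> k = k'"
  shows "\<exists>u w. (\<forall>k\<le>N. u k 0 = 1) \<and> (\<forall>k\<le>N. w k > 0) \<and>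
     (\<forall>k\<le>N. \<forall>i\<le>N. (\<Sum>j\<le>N. J$$(i,j) * u k j) = lam k * u k i) \<and>
     (\<forall>m. \<forall>i\<le>N. \<forall>j\<le>N. (J ^\<^sub>m m) $$ (i,j) = (\<Sum>k\<le>N. lam k ^ m * w k * u k i * u k j))"
proof -
  have C: "J \<in> carrier_mat (N+1) (N+1)" using J unfolding jacobi_matrix_def by auto
  have lt: "{..<N+1} = {..N}" by auto
  have sym: "\<forall>i\<le>N. \<forall>j\<le>N. J $$ (i,j) = J $$ (j,i)" using J unfolding jacobi_matrix_def by auto
  have "\<forall>k. \<exists>v. k \<le> N \<longrightarrow> v \<in> carrier_vec (N+1) \<and> v \<noteq> 0\<^sub>v (N+1) \<and> J *\<^sub>v v = lam k \<cdot>\<^sub>v v"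
  proof
    fix k
    show "\<exists>v. k \<le> N \<longrightarrow> v \<in> carrier_vec (N+1) \<and> v \<noteq> 0\<^sub>v (N+1) \<and> J *\<^sub>v v = lam k \<cdot>\<^sub>v v"
    proof (cases "k \<le> N")
      case True
      then obtain v where "eigenvector J v (lam k)" using ev unfolding eigenvalue_def by blast
      then have "v \<in> carrier_vec (N+1) \<and> v \<noteq> 0\<^sub>v (N+1) \<and> J *\<^sub>v v = lam k \<cdot>\<^sub>v v"
        unfolding eigenvector_def using C by simp
      then show ?thesis by blast
    qed simp
  qed
  then obtain V where V': "\<forall>k. k \<le> N \<longrightarrow> V k \<in> carrier_vec (N+1) \<and> V k \<noteq> 0\<^sub>v (N+1) \<and> J *\<^sub>v V k = lam k \<cdot>\<^sub>v V k"
    by (rule choice[THEN exE])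
  then have V: "\<And>k. k \<le> N \<Longrightarrow> V k \<in> carrier_vec (N+1) \<and> V k \<noteq> 0\<^sub>v (N+1) \<and> J *\<^sub>v V k = lam k \<cdot>\<^sub>v V k"
    by blast
  have Veq: "(\<Sum>j\<le>N. J$$(i,j) * V k $ j) = lam k * V k $ i" if "k \<le> N" "i \<le> N" for k i
  proof -
    have e1: "(J *\<^sub>v V k) $ i = (\<Sum>l<N+1. J $$ (i,l) * V k $ l)"
      using V[OF that(1)] that by (intro mult_vec_entry[OF C]) auto
    have e2: "(J *\<^sub>v V k) $ i = lam k * V k $ i" 
    proof -
      have "J *\<^sub>v V k = lam k \<cdot>\<^sub>v V k" "V k \<in> carrier_vec (N+1)" using V[OF that(1)] by auto
      then show ?thesis using that by simp
    qed
    show ?thesis using e1 e2 unfolding lt by simp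
  qed
  have V0: "V k $ 0 \<noteq> 0" if "k \<le> N" for k
  proof
    assume "V k $ 0 = 0"
    have ev0: "\<forall>i\<le>N. (\<Sum>j\<le>N. J$$(i,j) * V k $ j) = lam k * V k $ i" using Veq[OF that] by blast
    have z: "\<forall>i\<le>N. V k $ i = 0" by (rule eig_zero[OF J, of "\<lambda>j. V k $ j" "lam k"]) (use ev0 \<open>V k $ 0 = 0\<close> in blast)+
    have "V k = 0\<^sub>v (N+1)"
    proof (rule eq_vecI)
      fix i assume "i < dim_vec (0\<^sub>v (N+1) :: real vec)"
      then show "V k $ i = 0\<^sub>v (N+1) $ i" using z by simp
    next
      show "dim_vec (V k) = dim_vec (0\<^sub>v (N+1) :: real vec)" using V[OF that] by simp
    qed
    then show False using V[OF that] by simp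
  qed
  define u where "u k i = V k $ i / V k $ 0" for k i
  have u0: "\<forall>k\<le>N. u k 0 = 1" using V0 unfolding u_def by simp
  have ueq: "(\<Sum>j\<le>N. J$$(i,j) * u k j) = lam k * u k i" if "k \<le> N" "i \<le> N" for k i
  proof -
    have "(\<Sum>j\<le>N. J$$(i,j) * u k j) = (\<Sum>j\<le>N. J$$(i,j) * V k $ j) / V k $ 0"
      unfolding u_def sum_divide_distrib by simp
    also have "\<dots> = lam k * V k $ i / V k $ 0" using Veq[OF that] by simp
    also have "\<dots> = lam k * u k i" unfolding u_def by simp
    finally show ?thesis .
  qed
  define nn where "nn k = (\<Sum>i\<le>N. (u k i)^2)" for k
  have nnpos: "nn k > 0" if "k \<le> N" for k
  proof -
    have "(u k 0)^2 \<le> nn k" unfolding nn_def by (rule member_le_sum) auto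
    then show ?thesis using u0 that by simp
  qed
  have orth: "(\<Sum>i\<le>N. u k i * u k' i) = 0" if "k \<le> N" "k' \<le> N" "k \<noteq> k'" for k k'
  proof -
    have "lam k * (\<Sum>i\<le>N. u k i * u k' i) = (\<Sum>i\<le>N. (\<Sum>j\<le>N. J$$(i,j) * u k j) * u k' i)"
      by (simp add: sum_distrib_left ueq[OF that(1)] mult.assoc)
    also have "\<dots> = (\<Sum>i\<le>N. \<Sum>j\<le>N. J$$(i,j) * u k j * u k' i)"
      by (simp add: sum_distrib_right)
    also have "\<dots> = (\<Sum>j\<le>N. \<Sum>i\<le>N. J$$(i,j) * u k j * u k' i)"
      by (rule sum.swap)
    also have "\<dots> = (\<Sum>j\<le>N. u k j * (\<Sum>i\<le>N. J$$(j,i) * u k' i))"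
    proof (rule sum.cong[OF refl])
      fix j assume j: "j \<in> {..N}"
      show "(\<Sum>i\<le>N. J$$(i,j) * u k j * u k' i) = u k j * (\<Sum>i\<le>N. J$$(j,i) * u k' i)"
        unfolding sum_distrib_left
      proof (rule sum.cong[OF refl])
        fix i assume i: "i \<in> {..N}"
        have "J$$(i,j) = J$$(j,i)" using sym i j by auto
        then show "J$$(i,j) * u k j * u k' i = u k j * (J$$(j,i) * u k' i)" by simp
      qed
    qed
    also have "\<dots> = (\<Sum>j\<le>N. u k j * (lam k' * u k' j))"
      by (rule sum.cong[OF refl]) (use ueq that in auto)
    also have "\<dots> = lam k' * (\<Sum>i\<le>N. u k i * u k' i)"
      by (simp add: sum_distrib_left mult_ac)
    finally have "(lam k - lam k') * (\<Sum>i\<le>N. u k i * u k' i) = 0" by (simp add: algebra_simps)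
    moreover have "lam k \<noteq> lam k'" using inj that by auto
    ultimately show ?thesis by simp
  qed
  define w where "w k = 1 / nn k" for k
  have wpos: "\<forall>k\<le>N. w k > 0" using nnpos unfolding w_def by simp
  define U where "U = mat (N+1) (N+1) (\<lambda>(i,k). u k i * sqrt (w k))"
  have UC: "U \<in> carrier_mat (N+1) (N+1)" unfolding U_def by simp
  have UTC: "transpose_mat U \<in> carrier_mat (N+1) (N+1)" unfolding U_def by simp
  have "transpose_mat U * U = 1\<^sub>m (N+1)"
  proof (rule eq_matI)
    fix k k' assume kk: "k < dim_row (1\<^sub>m (N+1))" "k' < dim_col (1\<^sub>m (N+1):: real mat)"
    then have kk': "k \<le> N" "k' \<le> N" by auto
    have "(transpose_mat U * U) $$ (k,k') = (\<Sum>l<N+1. transpose_mat U $$ (k,l) * U $$ (l,k'))"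
      by (rule mult_entry[OF UTC UC]) (use kk in auto)
    also have "\<dots> = (\<Sum>l\<le>N. (u k l * sqrt (w k)) * (u k' l * sqrt (w k')))"
      unfolding lt by (rule sum.cong[OF refl]) (use kk' in \<open>auto simp: U_def\<close>)
    also have "\<dots> = sqrt (w k) * sqrt (w k') * (\<Sum>l\<le>N. u k l * u k' l)"
      by (simp add: sum_distrib_left mult_ac)
    also have "\<dots> = 1\<^sub>m (N+1) $$ (k,k')"
    proof (cases "k = k'")
      case True
      have "sqrt (w k) * sqrt (w k) = w k" using wpos kk' by (simp add: less_imp_le)
      then show ?thesis using True kk nnpos[OF kk'(1)] unfolding w_def nn_def
        by (simp add: power2_eq_square)
    next
      case False then show ?thesis using orth kk' kk by simp
    qed
    finally show "(transpose_mat U * U) $$ (k,k') = 1\<^sub>m (N+1) $$ (k,k')" .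
  qed (auto simp: U_def)
  then have UU: "U * transpose_mat U = 1\<^sub>m (N+1)"
    by (rule mat_mult_left_right_inverse[OF UTC UC])
  have complete: "(\<Sum>k\<le>N. w k * u k i * u k j) = (if i = j then 1 else 0)" if "i \<le> N" "j \<le> N" for i j
  proof -
    have "(U * transpose_mat U) $$ (i,j) = (\<Sum>k<N+1. U $$ (i,k) * transpose_mat U $$ (k,j))"
      by (rule mult_entry[OF UC UTC]) (use that in auto)
    also have "\<dots> = (\<Sum>k<N+1. (u k i * sqrt (w k)) * (u k j * sqrt (w k)))"
      by (rule sum.cong[OF refl]) (use that in \<open>auto simp: U_def\<close>)
    also have "\<dots> = (\<Sum>k\<le>N. w k * u k i * u k j)"
    proof -
      have "\<And>k. k \<le> N \<Longrightarrow> (u k i * sqrt (w k)) * (u k j * sqrt (w k)) = w k * u k i * u k j"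
      proof -
        fix k assume "k \<le> N"
        then have "sqrt (w k) * sqrt (w k) = w k" using wpos by (simp add: less_imp_le)
        then show "(u k i * sqrt (w k)) * (u k j * sqrt (w k)) = w k * u k i * u k j"
          by (metis mult.commute mult.left_commute)
      qed
      then show ?thesis unfolding lt by (auto intro!: sum.cong)
    qed
    finally show ?thesis using UU that by simp
  qed
  have pw: "(J ^\<^sub>m m) $$ (i,j) = (\<Sum>k\<le>N. lam k ^ m * w k * u k i * u k j)" if "i \<le> N" "j \<le> N" for m i j
    using that
  proof (induction m arbitrary: j)
    case 0
    then show ?case using C complete by simp
  next
    case (Suc m)
    have "(J ^\<^sub>m Suc m) $$ (i,j) = (\<Sum>l<N+1. (J ^\<^sub>m m) $$ (i,l) * J $$ (l,j))"
      unfolding pow_mat.simps(2) using Suc.prems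
      by (intro mult_entry[OF pow_carrier_mat[OF C] C]) auto
    also have "\<dots> = (\<Sum>l\<le>N. (\<Sum>k\<le>N. lam k ^ m * w k * u k i * u k l) * J $$ (j,l))"
      unfolding lt
    proof (rule sum.cong[OF refl])
      fix l assume l: "l \<in> {..N}"
      have "J $$ (l,j) = J $$ (j,l)" using sym l Suc.prems by auto
      moreover have "(J ^\<^sub>m m) $$ (i,l) = (\<Sum>k\<le>N. lam k ^ m * w k * u k i * u k l)"
        using Suc.IH Suc.prems l by auto
      ultimately show "(J ^\<^sub>m m) $$ (i,l) * J $$ (l,j) = (\<Sum>k\<le>N. lam k ^ m * w k * u k i * u k l) * J $$ (j,l)"
        by simp
    qed
    also have "\<dots> = (\<Sum>l\<le>N. \<Sum>k\<le>N. lam k ^ m * w k * u k i * (J $$ (j,l) * u k l))"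
      unfolding sum_distrib_right by (intro sum.cong refl) (simp add: mult_ac)
    also have "\<dots> = (\<Sum>k\<le>N. \<Sum>l\<le>N. lam k ^ m * w k * u k i * (J $$ (j,l) * u k l))"
      by (rule sum.swap)
    also have "\<dots> = (\<Sum>k\<le>N. lam k ^ m * w k * u k i * (\<Sum>l\<le>N. J $$ (j,l) * u k l))"
      by (simp add: sum_distrib_left)
    also have "\<dots> = (\<Sum>k\<le>N. lam k ^ Suc m * w k * u k i * u k j)"
      using Suc.prems by (auto simp: ueq intro!: sum.cong)
    finally show ?case .
  qed
  show ?thesis
    by (rule exI[of _ u], rule exI[of _ w]) (use u0 wpos ueq pw in auto)
qed


lemma absprod:
  assumes "k \<le> N"
  shows "(\<Prod>j\<in>{..N}-{k}. \<bar>real k - real j\<bar>) = fact k * fact (N-k)"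
  using assms
proof (induction N rule: dec_induct)
  case base
  have "{..k}-{k} = {0..<k}" by auto
  then have "(\<Prod>j\<in>{..k}-{k}. \<bar>real k - real j\<bar>) = (\<Prod>j\<in>{0..<k}. real (k - j))"
    by (auto intro!: prod.cong simp: of_nat_diff)
  also have "\<dots> = fact k" by (simp add: fact_prod_rev[of k] of_nat_prod)
  finally show ?case by simp
next
  case (step n)
  have "{..Suc n}-{k} = insert (Suc n) ({..n}-{k})" using step by auto
  then have "(\<Prod>j\<in>{..Suc n}-{k}. \<bar>real k - real j\<bar>) = \<bar>real k - real (Suc n)\<bar> * (\<Prod>j\<in>{..n}-{k}. \<bar>real k - real j\<bar>)"
    by simp
  also have "\<dots> = real (Suc (n - k)) * (fact k * fact (n-k))" using step by (simp add: of_nat_diff)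
  also have "\<dots> = fact k * fact (Suc n - k)" using step by (simp add: Suc_diff_le)
  finally show ?case .
qed


lemma weights:
  assumes J: "jacobi_matrix N J" and P: "persymmetric N J" and N1: "N \<ge> 1"
    and d: "d > 0" and lamd: "\<forall>k\<le>N. lam k = lam 0 + real k * d"
    and u0: "\<forall>k\<le>N. u k 0 = 1" and wpos: "\<forall>k\<le>N. w k > 0"
    and ueq: "\<forall>k\<le>N. \<forall>i\<le>N. (\<Sum>j\<le>N. J$$(i,j) * u k j) = lam k * u k i"
    and pw: "\<forall>m. \<forall>i\<le>N. \<forall>j\<le>N. (J ^\<^sub>m m) $$ (i,j) = (\<Sum>k\<le>N. lam k ^ m * w k * u k i * u k j)"
  shows "\<exists>c>0. \<forall>k\<le>N. w k = c * real (N choose k)"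
proof -
  have sym: "\<forall>i\<le>N. \<forall>j\<le>N. J $$ (i,j) = J $$ (j,i)" using J unfolding jacobi_matrix_def by auto
  have tri: "\<forall>i\<le>N. \<forall>j\<le>N. j \<noteq> i \<and> j \<noteq> Suc i \<and> i \<noteq> Suc j \<longrightarrow> J $$ (i,j) = 0"
    using J unfolding jacobi_matrix_def by blast
  have pd: "\<forall>k\<le>N. J $$ (k,k) = J $$ (N-k, N-k)" and po: "\<forall>l<N. J $$ (l, Suc l) = J $$ (N-1-l, N-l)"
    using P unfolding persymmetric_def by blast+
  have Jrev: "J $$ (N-i,N-j) = J $$ (i,j)" if "i \<le> N" "j \<le> N" for i j
  proof -
    consider "j = i" | "j = Suc i" | "i = Suc j" | "j \<noteq> i \<and> j \<noteq> Suc i \<and> i \<noteq> Suc j" by blast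
    then show ?thesis
    proof cases
      case 1 then show ?thesis using pd[rule_format, of i] that by simp
    next
      case 2
      then have "J $$ (i,j) = J $$ (N-1-i, N-i)" using po[rule_format, of i] that by simp
      also have "\<dots> = J $$ (N-i, N-1-i)" using sym[rule_format, of "N-1-i" "N-i"] by simp
      also have "N-1-i = N-j" using 2 by simp
      finally show ?thesis by simp
    next
      case 3
      then have "J $$ (j,i) = J $$ (N-1-j, N-j)" using po[rule_format, of j] that by simp
      also have "\<dots> = J $$ (N-j, N-1-j)" using sym[rule_format, of "N-1-j" "N-j"] by simp
      also have "N-1-j = N-i" using 3 by simp
      finally show ?thesis using sym[rule_format, of i j] sym[rule_format, of "N-i" "N-j"] that by simp
    next
      case 4
      then have h: "N-j \<noteq> N-i \<and> N-j \<noteq> Suc (N-i) \<and> N-i \<noteq> Suc (N-j)" using that by presburger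
      have "J $$ (i,j) = 0" using tri that 4 by blast
      moreover have "J $$ (N-i,N-j) = 0" using tri h by (meson diff_le_self)
      ultimately show ?thesis by simp
    qed
  qed
  have refl_u: "u k (N-i) = u k N * u k i" if k: "k \<le> N" and i: "i \<le> N" for k i
  proof -
    define v where "v i = u k (N-i) - u k N * u k i" for i
    have "(\<Sum>j\<le>N. J$$(i,j) * v j) = lam k * v i" if i: "i \<le> N" for i
    proof -
      have "(\<Sum>j\<le>N. J$$(i,j) * u k (N-j)) = (\<Sum>j\<le>N. J$$(N-i,N-j) * u k (N-j))"
        using Jrev i by (auto intro!: sum.cong)
      also have "\<dots> = (\<Sum>j\<le>N. J$$(N-i,j) * u k j)"
        using sum.atLeastAtMost_rev[of "\<lambda>j. J$$(N-i,j) * u k j" 0 N] by (simp add: atMost_atLeast0)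
      also have "\<dots> = lam k * u k (N-i)" using ueq k by simp
      finally have a: "(\<Sum>j\<le>N. J$$(i,j) * u k (N-j)) = lam k * u k (N-i)" .
      have "(\<Sum>j\<le>N. J$$(i,j) * v j) = (\<Sum>j\<le>N. J$$(i,j) * u k (N-j)) - u k N * (\<Sum>j\<le>N. J$$(i,j) * u k j)"
        unfolding v_def by (simp add: algebra_simps sum_subtractf sum_distrib_left)
      also have "\<dots> = lam k * v i" using a ueq k i unfolding v_def by (simp add: algebra_simps)
      finally show ?thesis .
    qed
    moreover have "v 0 = 0" unfolding v_def using u0 k by simp
    ultimately have "\<forall>i\<le>N. v i = 0" using eig_zero[OF J] by blast
    then show ?thesis using i unfolding v_def by simp
  qed
  have uN: "\<bar>u k N\<bar> = 1" if "k \<le> N" for k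
  proof -
    have "u k (N-N) = u k N * u k N" using refl_u[OF that, of N] by simp
    then have "(u k N)^2 = 1" using u0 that by (simp add: power2_eq_square)
    then show ?thesis by (auto simp: power2_eq_1_iff)
  qed
  define s where "s k = w k * u k N" for k
  have mom: "(\<Sum>k\<le>N. lam k ^ m * s k) = 0" if "m < N" for m
  proof -
    have "(J ^\<^sub>m m) $$ (N,0) = 0" by (rule pow_band[OF J]) (use that in auto)
    then show ?thesis using pw u0 unfolding s_def by (simp add: mult_ac)
  qed
  define B where "B = (\<Sum>k\<le>N. lam k ^ N * s k)"
  have key: "s k * (\<Prod>j\<in>{..N}-{k}. (lam k - lam j)) = B" if k: "k \<le> N" for k
  proof -
    define L where "L = (\<Prod>j\<in>{..N}-{k}. [:-lam j, 1:])"
    have fin: "finite ({..N}-{k})" by simp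
    have "monic L" unfolding L_def by (rule monic_prod) simp
    have degL: "degree L = N" unfolding L_def
      using degree_prod_eq_sum_degree[of "{..N}-{k}" "\<lambda>j. [:-lam j, 1:]"] k by simp
    have lc: "coeff L N = 1" using \<open>monic L\<close> degL by simp
    have "(\<Sum>i\<le>N. s i * poly L (lam i)) = (\<Sum>i\<le>N. s i * (\<Sum>m\<le>N. coeff L m * lam i ^ m))"
      by (simp add: poly_altdef degL)
    also have "\<dots> = (\<Sum>i\<le>N. \<Sum>m\<le>N. coeff L m * (lam i ^ m * s i))"
      by (simp add: sum_distrib_left mult_ac)
    also have "\<dots> = (\<Sum>m\<le>N. \<Sum>i\<le>N. coeff L m * (lam i ^ m * s i))"
      by (rule sum.swap)
    also have "\<dots> = (\<Sum>m\<le>N. coeff L m * (\<Sum>i\<le>N. lam i ^ m * s i))"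
      by (simp add: sum_distrib_left)
    also have "\<dots> = (\<Sum>m\<in>insert N {..<N}. coeff L m * (\<Sum>i\<le>N. lam i ^ m * s i))"
      by (rule sum.cong) auto
    also have "\<dots> = B" using mom lc by (simp add: B_def)
    finally have 1: "(\<Sum>i\<le>N. s i * poly L (lam i)) = B" .
    have "(\<Sum>i\<le>N. s i * poly L (lam i)) = (\<Sum>i\<le>N. if i = k then s k * poly L (lam k) else 0)"
    proof (rule sum.cong)
      fix i assume i: "i \<in> {..N}"
      show "s i * poly L (lam i) = (if i = k then s k * poly L (lam k) else 0)"
      proof (cases "i = k")
        case False
        then have "poly L (lam i) = 0" using i unfolding L_def poly_prod
          by (subst prod_zero_iff) auto
        then show ?thesis using False by simp
      qed simp
    qed simp
    also have "\<dots> = s k * poly L (lam k)" using k by simp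
    finally show ?thesis using 1 unfolding L_def poly_prod by simp
  qed
  have wk: "w k * (d ^ N * (fact k * fact (N-k))) = \<bar>B\<bar>" if k: "k \<le> N" for k
  proof -
    have card: "card ({..N}-{k}) = N" using k by simp
    have "(\<Prod>j\<in>{..N}-{k}. \<bar>lam k - lam j\<bar>) = (\<Prod>j\<in>{..N}-{k}. d * \<bar>real k - real j\<bar>)"
    proof (rule prod.cong)
      fix j assume jj: "j \<in> {..N}-{k}"
      have "lam k - lam j = d * (real k - real j)" using lamd[rule_format, of k] lamd[rule_format, of j] k jj
        by (simp add: algebra_simps)
      then show "\<bar>lam k - lam j\<bar> = d * \<bar>real k - real j\<bar>" using d by (simp add: abs_mult)
    qed simp
    also have "\<dots> = d ^ N * (fact k * fact (N-k))"
      using absprod[OF k] card by (simp add: prod.distrib)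
    finally have pr: "(\<Prod>j\<in>{..N}-{k}. \<bar>lam k - lam j\<bar>) = d ^ N * (fact k * fact (N-k))" .
    have "\<bar>s k\<bar> = w k" using uN[OF k] wpos k unfolding s_def by (simp add: abs_mult less_imp_le)
    then show ?thesis using arg_cong[OF key[OF k], of abs] pr by (simp add: abs_mult abs_prod)
  qed
  define c where "c = \<bar>B\<bar> / (d ^ N * fact N)"
  have "w 0 * (d ^ N * (fact 0 * fact N)) > 0" using wpos d by simp
  then have Bpos: "\<bar>B\<bar> > 0" using wk[of 0] by simp
  show ?thesis
  proof (intro exI[of _ c] conjI allI impI)
    show "c > 0" unfolding c_def using Bpos d by simp
  next
    fix k assume k: "k \<le> N"
    have "w k = \<bar>B\<bar> / (d ^ N * (fact k * fact (N-k)))" using wk[OF k] d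
      by (simp add: field_simps)
    also have "\<dots> = c * real (N choose k)" unfolding c_def using binomial_fact[OF k, where ?'a=real] d
      by (simp add: field_simps)
    finally show "w k = c * real (N choose k)" .
  qed
qed


lemma exp_sums: "(\<lambda>n. y^n / fact n) sums exp (y::complex)"
proof -
  have "(\<lambda>n. y^n /\<^sub>R fact n) = (\<lambda>n. y^n / fact n)"
    by (rule ext) (simp add: scaleR_conv_of_real divide_inverse mult.commute)
  then show ?thesis using exp_converges[of y] by simp
qed

lemma evol_formula:
  assumes C: "J \<in> carrier_mat (N+1) (N+1)"
    and pw: "\<forall>m. \<forall>i\<le>N. \<forall>j\<le>N. (J ^\<^sub>m m) $$ (i,j) = (\<Sum>k\<le>N. lam k ^ m * w k * u k i * u k j)"
    and u0: "\<forall>k\<le>N. u k 0 = 1" and j: "j \<le> N"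
  shows "evol N J t $ j = (\<Sum>k\<le>N. of_real (w k * u k j) * exp (- (\<i> * of_real t) * of_real (lam k)))"
proof -
  define x where "x = - (\<i> * complex_of_real t)"
  have trm: "(x ^ m / fact m) * (map_mat complex_of_real J ^\<^sub>m m) $$ (j, 0)
      = (\<Sum>k\<le>N. of_real (w k * u k j) * ((x * of_real (lam k)) ^ m / fact m))" for m
  proof -
    have eqm: "map_mat complex_of_real J ^\<^sub>m m = map_mat complex_of_real (J ^\<^sub>m m)"
      by (rule of_real_hom.mat_hom_pow[OF C, symmetric])
    have "(map_mat complex_of_real J ^\<^sub>m m) $$ (j, 0) = of_real ((J ^\<^sub>m m) $$ (j,0))"
      unfolding eqm using j pow_carrier_mat[OF C, of m] by (subst index_map_mat) auto
    also have "\<dots> = of_real (\<Sum>k\<le>N. lam k ^ m * w k * u k j)"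
      using pw j u0 by simp
    finally have e: "(map_mat complex_of_real J ^\<^sub>m m) $$ (j, 0) = (\<Sum>k\<le>N. of_real (lam k ^ m * w k * u k j))"
      by simp
    show ?thesis unfolding e sum_distrib_left
    proof (rule sum.cong)
      fix k
      show "x ^ m / fact m * complex_of_real (lam k ^ m * w k * u k j) =
         complex_of_real (w k * u k j) * ((x * complex_of_real (lam k)) ^ m / fact m)"
        by (simp add: power_mult_distrib)
    qed simp
  qed
  have "(\<lambda>m. \<Sum>k\<le>N. of_real (w k * u k j) * ((x * of_real (lam k)) ^ m / fact m))
        sums (\<Sum>k\<le>N. of_real (w k * u k j) * exp (x * of_real (lam k)))"
    by (rule sums_sum, rule sums_mult, rule exp_sums)
  then have "(\<lambda>m. (x ^ m / fact m) * (map_mat complex_of_real J ^\<^sub>m m) $$ (j, 0))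
        sums (\<Sum>k\<le>N. of_real (w k * u k j) * exp (x * of_real (lam k)))"
    unfolding trm .
  then have "(\<Sum>m. (x ^ m / fact m) * (map_mat complex_of_real J ^\<^sub>m m) $$ (j, 0))
       = (\<Sum>k\<le>N. of_real (w k * u k j) * exp (x * of_real (lam k)))"
    by (rule sums_unique[symmetric])
  moreover have "evol N J t $ j = (\<Sum>m. (x ^ m / fact m) * (map_mat complex_of_real J ^\<^sub>m m) $$ (j, 0))"
    unfolding evol_def x_def using j by (subst index_vec) auto
  ultimately show ?thesis unfolding x_def by simp
qed

lemma ex1: "exp (- (\<i> * complex_of_real s) * complex_of_real d) = cis (- (s * d))"
  by (simp add: cis_conv_exp mult.assoc)
lemma ex2: "cis (- pi) = -1"
  by (simp add: complex_eq_iff)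
lemma ex3: "exp (- (\<i> * complex_of_real s) * complex_of_real (l0 + real k * d)) =
   exp (- (\<i> * complex_of_real s) * complex_of_real l0) * exp (- (\<i> * complex_of_real s) * complex_of_real d) ^ k"
proof -
  have eq: "- (\<i> * complex_of_real s) * complex_of_real (l0 + real k * d) =
     - (\<i> * complex_of_real s) * complex_of_real l0 + of_nat k * (- (\<i> * complex_of_real s) * complex_of_real d)"
    by (simp add: algebra_simps)
  show ?thesis unfolding eq exp_add exp_of_nat_mult by (rule refl)
qed
lemma ex4: "Im (cis x) = sin x" by simp
lemma ex5: "exp (\<i> * complex_of_real (a + b - c)) = exp (\<i> * complex_of_real a) * exp (\<i> * complex_of_real b) * exp (- (\<i> * complex_of_real c))"
proof -
  have "\<i> * complex_of_real (a + b - c) = \<i> * complex_of_real a + \<i> * complex_of_real b + (- (\<i> * complex_of_real c))"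
    by (simp add: algebra_simps)
  then show ?thesis by (simp only: exp_add)
qed

theorem mainTheorem3:
  fixes N :: nat and J :: "real mat" and lam :: "nat \<Rightarrow> real"
  assumes "N \<ge> 1"
    and "jacobi_matrix N J"
    and "persymmetric N J"
    and "\<exists>T. PST_at N J T"
    and "\<forall>i<N. lam i < lam (Suc i)"
    and "{x. eigenvalue J x} = lam ` {0..N}"
    and "\<forall>i<N. lam (Suc i) - lam i = lam 1 - lam 0"
  shows "\<not> (\<exists>t. ESE_at N J t)"
proof
  assume "\<exists>t. ESE_at N J t"
  then obtain t T0 where t0: "0 < t" and tT: "t < T0" and early: "earliest_PST N J T0"
    and g: "evol N J t \<bullet>c unit_vec (N+1) 0 = 0"
    unfolding ESE_at_def by blast
  have J: "jacobi_matrix N J" and N1: "N \<ge> 1" using assms(1,2) by auto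
  have C: "J \<in> carrier_mat (N+1) (N+1)" using J unfolding jacobi_matrix_def by auto
  have ev: "\<forall>k\<le>N. eigenvalue J (lam k)"
  proof (intro allI impI)
    fix k assume "k \<le> N"
    then have "lam k \<in> lam ` {0..N}" by simp
    then show "eigenvalue J (lam k)" using assms(6) by blast
  qed
  have mono: "lam i < lam j" if "i < j" "j \<le> N" for i j
    using that
  proof (induction j)
    case 0 then show ?case by simp
  next
    case (Suc j)
    have "lam j < lam (Suc j)" using assms(5)[rule_format, of j] Suc.prems by simp
    then show ?case using Suc by (cases "i = j") auto
  qed
  have inj: "\<forall>k\<le>N. \<forall>k'\<le>N. lam k = lam k' \<longrightarrow> k = k'"
    by (metis linorder_neqE_nat mono order_less_irrefl)
  define d where "d = lam 1 - lam 0"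
  have d: "d > 0" using assms(5)[rule_format, of 0] N1 unfolding d_def by simp
  have lamd: "\<forall>k\<le>N. lam k = lam 0 + real k * d"
  proof (intro allI impI)
    fix k show "k \<le> N \<Longrightarrow> lam k = lam 0 + real k * d"
    proof (induction k)
      case (Suc k)
      then have "lam (Suc k) - lam k = d" using assms(7)[rule_format, of k] unfolding d_def by simp
      then show ?case using Suc by (simp add: algebra_simps)
    qed simp
  qed
  obtain u w where u0: "\<forall>k\<le>N. u k 0 = 1" and wpos: "\<forall>k\<le>N. w k > 0"
    and ueq: "\<forall>k\<le>N. \<forall>i\<le>N. (\<Sum>j\<le>N. J$$(i,j) * u k j) = lam k * u k i"
    and pw: "\<forall>m. \<forall>i\<le>N. \<forall>j\<le>N. (J ^\<^sub>m m) $$ (i,j) = (\<Sum>k\<le>N. lam k ^ m * w k * u k i * u k j)"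
    using spectral[OF J ev inj] by blast
  obtain c where c: "c > 0" and wc: "\<forall>k\<le>N. w k = c * real (N choose k)"
    using weights[OF J assms(3) N1 d lamd u0 wpos ueq pw] by blast
  define E where "E s = exp (- (\<i> * complex_of_real s) * complex_of_real (lam 0))" for s
  define Z where "Z s = exp (- (\<i> * complex_of_real s) * complex_of_real d)" for s
  define S where "S z j = (\<Sum>k\<le>N. complex_of_real (w k * u k j) * z ^ k)" for z j
  have EF: "evol N J s $ j = E s * S (Z s) j" if j: "j \<le> N" for s j
  proof -
    have "evol N J s $ j = (\<Sum>k\<le>N. of_real (w k * u k j) * exp (- (\<i> * of_real s) * of_real (lam k)))"
      by (rule evol_formula[OF C pw u0 j])
    also have "\<dots> = (\<Sum>k\<le>N. of_real (w k * u k j) * (E s * Z s ^ k))"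
    proof (rule sum.cong)
      fix k assume "k \<in> {..N}"
      then have lamk: "lam k = lam 0 + real k * d" using lamd[rule_format, of k] by simp
      show "of_real (w k * u k j) * exp (- (\<i> * of_real s) * of_real (lam k)) = of_real (w k * u k j) * (E s * Z s ^ k)"
        unfolding lamk ex3 E_def Z_def by (rule refl)
    qed simp
    also have "\<dots> = E s * S (Z s) j" unfolding S_def sum_distrib_left
      by (rule sum.cong) (simp_all add: mult.left_commute)
    finally show ?thesis .
  qed
  have S0: "S z 0 = complex_of_real c * (z + 1) ^ N" for z
  proof -
    have "S z 0 = (\<Sum>k\<le>N. complex_of_real c * (of_nat (N choose k) * z ^ k * 1 ^ (N - k)))"
      unfolding S_def using wc u0 by (auto intro!: sum.cong)
    also have "\<dots> = complex_of_real c * (z + 1) ^ N"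
      by (simp add: binomial_ring sum_distrib_left)
    finally show ?thesis .
  qed
  have Enz: "E s \<noteq> 0" for s unfolding E_def by simp
  have zero: "Z s = -1" if "evol N J s $ 0 = 0" for s
  proof -
    have "E s * (complex_of_real c * (Z s + 1) ^ N) = 0" using that EF[of 0 s] S0 by simp
    then have "(Z s + 1) ^ N = 0" using Enz c by simp
    then have "Z s + 1 = 0" by simp
    then show ?thesis by (simp add: eq_neg_iff_add_eq_0)
  qed
  from early obtain \<phi> where T0: "T0 > 0" and PT: "evol N J T0 = exp (\<i> * complex_of_real \<phi>) \<cdot>\<^sub>v unit_vec (N+1) N"
    and Tmin: "\<And>T. PST_at N J T \<Longrightarrow> T0 \<le> T"
    unfolding earliest_PST_def PST_at_def by blast
  have "evol N J T0 $ 0 = 0" unfolding PT using N1 by simp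
  then have ZT0: "Z T0 = -1" by (rule zero)
  define Tp where "Tp = pi / d"
  have Tp: "Tp > 0" unfolding Tp_def using d by simp
  have ZTp: "Z Tp = -1" unfolding Z_def ex1 Tp_def using d ex2 by simp
  have "PST_at N J Tp"
    unfolding PST_at_def
  proof (intro conjI exI)
    show "Tp > 0" by (rule Tp)
    show "evol N J Tp = exp (\<i> * complex_of_real (\<phi> + T0 * lam 0 - Tp * lam 0)) \<cdot>\<^sub>v unit_vec (N+1) N"
    proof (rule eq_vecI)
      fix j assume "j < dim_vec (exp (\<i> * complex_of_real (\<phi> + T0 * lam 0 - Tp * lam 0)) \<cdot>\<^sub>v unit_vec (N+1) N)"
      then have j: "j \<le> N" by simp
      have a: "E T0 * S (-1) j = exp (\<i> * complex_of_real \<phi>) * unit_vec (N+1) N $ j"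
        using EF[OF j, of T0] ZT0 j unfolding PT by simp
      have b: "E T0 * exp (\<i> * complex_of_real (T0 * lam 0)) = 1"
        unfolding E_def by (simp add: exp_add[symmetric] mult.assoc)
      have "evol N J Tp $ j = E Tp * S (-1) j" using EF[OF j, of Tp] ZTp by simp
      also have "\<dots> = E Tp * (E T0 * exp (\<i> * complex_of_real (T0 * lam 0))) * S (-1) j" using b by simp
      also have "\<dots> = E Tp * exp (\<i> * complex_of_real (T0 * lam 0)) * (exp (\<i> * complex_of_real \<phi>) * unit_vec (N+1) N $ j)"
        using a by (simp add: mult_ac)
      also have "\<dots> = exp (\<i> * complex_of_real (\<phi> + T0 * lam 0 - Tp * lam 0)) * unit_vec (N+1) N $ j"
        unfolding ex5 E_def by (simp add: mult_ac)
      also have "\<dots> = (exp (\<i> * complex_of_real (\<phi> + T0 * lam 0 - Tp * lam 0)) \<cdot>\<^sub>v unit_vec (N+1) N) $ j"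
        using j by simp
      finally show "evol N J Tp $ j = (exp (\<i> * complex_of_real (\<phi> + T0 * lam 0 - Tp * lam 0)) \<cdot>\<^sub>v unit_vec (N+1) N) $ j" .
    qed (simp add: evol_def)
  qed
  then have "T0 \<le> Tp" by (rule Tmin)
  then have "T0 * d \<le> pi" using d unfolding Tp_def by (simp add: field_simps)
  moreover have "t * d < T0 * d" using tT d by (rule mult_strict_right_mono)
  ultimately have td: "t * d < pi" by linarith
  have "evol N J t $ 0 = 0" using g ESE_entry by simp
  then have "Z t = -1" by (rule zero)
  then have "Im (cis (- (t * d))) = 0" unfolding Z_def ex1 by simp
  moreover have "sin (t * d) > 0" using td t0 d by (intro sin_gt_zero) auto
  ultimately show False by simp
qed

end
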